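(* Let $\nu\in A_2$. Then $\mathcal W_\nu(\mathbb R^n)\subset\mathrm{BMO}_\nu(\mathbb R^n)$.
   Context: $A_2$: weights $w$ with $\sup_Q(\frac1{|Q|}\int_Qw)(\frac1{|Q|}\int_Qw^{-1})<\infty$; $w(E)=\int_Ew$. $\mathrm{BMO}_\nu(\mathbb R^n)$: $b\in L^1_{loc}$ with $\sup_B\frac1{\nu(B)}\int_B|b-\langle b\rangle_B|<\infty$ (supremum over balls, $\langle b\rangle_B$ the average). $\mathcal D$ is the standard dyadic system, $cQ$ the concentric dilate of $Q$ by $c$. $\ell^{n,\infty}$: sequences with $\sup_kk^{1/n}a_k^*<\infty$, $\{a_k^*\}$ the non-increasing rearrangement of $\{|a_k|\}$. $\mathcal W_\nu(\mathbb R^n)$: $b\in L^1_{loc}$ such that $\big\{\frac1{\nu(20\sqrt nQ)}\int_{20\sqrt nQ}|b-\langle b\rangle_{20\sqrt nQ}|\big\}_{Q\in\mathcal D}\in\ell^{n,\infty}$. *)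

theory Defs
  imports "HOL-Analysis.Analysis"
begin

definition cube :: "'a::euclidean_space \<Rightarrow> real \<Rightarrow> 'a set" where
  "cube c r = {x. \<forall>i\<in>Basis. \<bar>x \<bullet> i - c \<bullet> i\<bar> \<le> r}"

definition wmeas :: "('a::euclidean_space \<Rightarrow> real) \<Rightarrow> 'a set \<Rightarrow> real" where
  "wmeas w E = (LINT x:E|lebesgue. w x)"

definition avg :: "('a::euclidean_space \<Rightarrow> real) \<Rightarrow> 'a set \<Rightarrow> real" where
  "avg f S = (LINT x:S|lebesgue. f x) / measure lebesgue S"

definition loc_int :: "('a::euclidean_space \<Rightarrow> real) \<Rightarrow> bool" where
  "loc_int f \<longleftrightarrow> (\<forall>K. compact K \<longrightarrow> set_integrable lebesgue K f)"

definition A2 :: "('a::euclidean_space \<Rightarrow> real) \<Rightarrow> bool" where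
  "A2 w \<longleftrightarrow> (\<forall>x. 0 \<le> w x) \<and> (AE x in lebesgue. 0 < w x) \<and> loc_int w \<and>
     loc_int (\<lambda>x. 1 / w x) \<and>
     (\<exists>C. \<forall>c r. 0 < r \<longrightarrow> avg w (cube c r) * avg (\<lambda>x. 1 / w x) (cube c r) \<le> C)"

definition wosc :: "('a::euclidean_space \<Rightarrow> real) \<Rightarrow> ('a \<Rightarrow> real) \<Rightarrow> 'a set \<Rightarrow> real" where
  "wosc \<nu> b S = (LINT x:S|lebesgue. \<bar>b x - avg b S\<bar>) / wmeas \<nu> S"

definition BMO :: "('a::euclidean_space \<Rightarrow> real) \<Rightarrow> ('a \<Rightarrow> real) set" where
  "BMO \<nu> = {b. loc_int b \<and> (\<exists>C. \<forall>c r. 0 < r \<longrightarrow> wosc \<nu> b (ball c r) \<le> C)}"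

text \<open>Standard dyadic system: the cube indexed by (j,k) is
  {x. for all basis vectors i, 2^j k_i \<le> x\<bullet>i < 2^j (k_i+1)}; k is normalised to be 0 off Basis
  so that indices correspond bijectively to cubes.\<close>
definition dyadic_index :: "(int \<times> ('a::euclidean_space \<Rightarrow> int)) set" where
  "dyadic_index = {(j, k). \<forall>i. i \<notin> Basis \<longrightarrow> k i = 0}"

definition dyadic_cube :: "int \<Rightarrow> ('a::euclidean_space \<Rightarrow> int) \<Rightarrow> 'a set" where
  "dyadic_cube j k = {x. \<forall>i\<in>Basis. 2 powr j * k i \<le> x \<bullet> i \<and> x \<bullet> i < 2 powr j * (k i + 1)}"

definition dyadic_dilate :: "real \<Rightarrow> int \<Rightarrow> ('a::euclidean_space \<Rightarrow> int) \<Rightarrow> 'a set" where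
  "dyadic_dilate c j k =
     cube (\<Sum>i\<in>Basis. (2 powr j * (k i + 1/2)) *\<^sub>R i) (c * 2 powr j / 2)"

text \<open>Non-increasing rearrangement of |a| over index set I, k = 1,2,...\<close>
definition rearr_set :: "'i set \<Rightarrow> ('i \<Rightarrow> real) \<Rightarrow> nat \<Rightarrow> real set" where
  "rearr_set I a k = {t. 0 \<le> t \<and> finite {q\<in>I. \<bar>a q\<bar> > t} \<and> card {q\<in>I. \<bar>a q\<bar> > t} < k}"

definition rearr :: "'i set \<Rightarrow> ('i \<Rightarrow> real) \<Rightarrow> nat \<Rightarrow> real" where
  "rearr I a k = Inf (rearr_set I a k)"

definition weak_ell :: "nat \<Rightarrow> 'i set \<Rightarrow> ('i \<Rightarrow> real) \<Rightarrow> bool" where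
  "weak_ell n I a \<longleftrightarrow> (\<forall>k\<ge>1. rearr_set I a k \<noteq> {}) \<and>
     (\<exists>C. \<forall>k\<ge>1. real k powr (1 / real n) * rearr I a k \<le> C)"

definition W :: "('a::euclidean_space \<Rightarrow> real) \<Rightarrow> ('a \<Rightarrow> real) set" where
  "W \<nu> = {b. loc_int b \<and>
     weak_ell DIM('a) (dyadic_index :: (int \<times> ('a \<Rightarrow> int)) set)
       (\<lambda>(j, k). wosc \<nu> b (dyadic_dilate (20 * sqrt (DIM('a))) j k))}"

end

theory Submission
  imports Defs
begin


lemma cube_cbox: "cube c r = cbox (c - r *\<^sub>R One) (c + r *\<^sub>R One)"
  unfolding cube_def cbox_def by (auto simp: inner_diff_left inner_add_left abs_le_iff algebra_simps)

lemma cube_compact: "compact (cube c r)" by (simp add: cube_cbox)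
lemma cube_lmeas: "cube c r \<in> lmeasurable" by (simp add: cube_cbox)
lemma cube_measure: "r \<ge> 0 \<Longrightarrow> measure lebesgue (cube (c::'a::euclidean_space) r) = (2*r)^DIM('a)"
  by (simp add: cube_cbox inner_diff_left inner_add_left)


lemma real_amgm_aux:
  fixes a x y :: real
  assumes "0 \<le> a" "0 \<le> x" "0 \<le> y" and H: "\<And>t. t > 0 \<Longrightarrow> 2*a \<le> t*x + y/t"
  shows "a^2 \<le> x*y"
proof (cases "x > 0 \<and> y > 0")
  case True
  define s where "s = sqrt (x*y)"
  have s: "s > 0" "s^2 = x*y" using True by (auto simp: s_def)
  define t where "t = s/x"
  have t: "t > 0" using True s by (simp add: t_def)
  have "t*x = s" using True by (simp add: t_def)
  moreover have "y/t = s" using True s unfolding t_def by (simp add: field_simps power2_eq_square)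
  ultimately have "a \<le> s" using H[OF t] by simp
  then have "a^2 \<le> s^2" using assms(1) by (simp add: power_mono)
  then show ?thesis using s by simp
next
  case False
  have "a \<le> 0"
  proof (rule ccontr)
    assume "\<not> a \<le> 0" then have a: "a > 0" by simp
    show False
    proof (cases "x = 0")
      case True
      have "2*a \<le> y / ((y+1)/a)" using H[of "(y+1)/a"] a assms True by simp
      also have "\<dots> = y*a/(y+1)" using a by (simp add: field_simps)
      also have "\<dots> < a" using a assms(3) by (simp add: field_simps)
      finally show False using a by simp
    next
      case False
      then have y: "y = 0" using \<open>\<not>(x > 0 \<and> y > 0)\<close> assms by auto
      have x: "x > 0" using False assms by simp
      have "2*a \<le> (a/x)*x" using H[of "a/x"] a x y by simp
      also have "\<dots> = a" using x by simp
      finally show False using a by simp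
    qed
  qed
  then have "a = 0" using assms by simp
  then show ?thesis using assms by simp
qed

lemma set_int_mono_set:
  fixes f :: "'a::euclidean_space \<Rightarrow> real"
  assumes "set_integrable lebesgue Q f" "B \<in> sets lebesgue" "B \<subseteq> Q" "\<And>x. x \<in> Q \<Longrightarrow> 0 \<le> f x"
  shows "(LINT x:B|lebesgue. f x) \<le> (LINT x:Q|lebesgue. f x)"
proof -
  have iB: "set_integrable lebesgue B f" using set_integrable_subset assms by blast
  show ?thesis
    unfolding set_lebesgue_integral_def
    apply (rule integral_mono)
    using iB assms(1) unfolding set_integrable_def apply auto[2]
    using assms(3,4) by (auto split: split_indicator)
qed

lemma set_int_nonneg:
  fixes f :: "'a::euclidean_space \<Rightarrow> real"
  assumes "\<And>x. x \<in> Q \<Longrightarrow> 0 \<le> f x"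
  shows "0 \<le> (LINT x:Q|lebesgue. f x)"
  unfolding set_lebesgue_integral_def
  by (rule integral_nonneg_AE) (use assms in \<open>auto split: split_indicator\<close>)


lemma loc_int_cube: "loc_int f \<Longrightarrow> set_integrable lebesgue (cube c r) f"
  unfolding loc_int_def using cube_compact by blast

lemma A2_doubling:
  fixes w :: "'a::euclidean_space \<Rightarrow> real"
  assumes "A2 w"
  obtains C where "C \<ge> 0" "\<And>c r E. 0 < r \<Longrightarrow> E \<in> sets lebesgue \<Longrightarrow> E \<subseteq> cube c r \<Longrightarrow>
     (measure lebesgue E)^2 * wmeas w (cube c r) \<le> C * (measure lebesgue (cube c r))^2 * wmeas w E"
proof -
  have wpos: "\<And>x. 0 \<le> w x" and ae: "AE x in lebesgue. 0 < w x" and li: "loc_int w"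
    and lis: "loc_int (\<lambda>x. 1 / w x)" using assms unfolding A2_def by auto
  obtain C0 where C0: "\<And>c r. 0 < r \<Longrightarrow> avg w (cube c r) * avg (\<lambda>x. 1 / w x) (cube c r) \<le> C0"
    using assms unfolding A2_def by auto
  define C where "C = max C0 0"
  have "(measure lebesgue E)^2 * wmeas w (cube c r) \<le> C * (measure lebesgue (cube c r))^2 * wmeas w E"
    if r: "0 < r" and E: "E \<in> sets lebesgue" "E \<subseteq> cube c r" for c r E
  proof -
    let ?Q = "cube c r"
    let ?s = "\<lambda>x. 1 / w x"
    have iwQ: "set_integrable lebesgue ?Q w" using loc_int_cube[OF li] .
    have isQ: "set_integrable lebesgue ?Q ?s" using loc_int_cube[OF lis] .
    have iwE: "set_integrable lebesgue E w" using set_integrable_subset[OF iwQ E(1) E(2)] .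
    have isE: "set_integrable lebesgue E ?s" using set_integrable_subset[OF isQ E(1) E(2)] .
    have Efin: "emeasure lebesgue E \<noteq> \<infinity>"
    proof -
      have "emeasure lebesgue E \<le> emeasure lebesgue ?Q" using E cube_lmeas[of c r] by (intro emeasure_mono) (auto simp: fmeasurable_def)
      moreover have "emeasure lebesgue ?Q < \<infinity>" using cube_lmeas[of c r] unfolding fmeasurable_def by blast
      ultimately show ?thesis by (simp add: top_unique)
    qed
    have nuE: "0 \<le> wmeas w E" unfolding wmeas_def using wpos by (intro set_int_nonneg) auto
    have nuQ: "0 \<le> wmeas w ?Q" unfolding wmeas_def using wpos by (intro set_int_nonneg) auto
    have sQ: "0 \<le> (LINT x:?Q|lebesgue. ?s x)" using wpos by (intro set_int_nonneg) auto
    have sEQ: "(LINT x:E|lebesgue. ?s x) \<le> (LINT x:?Q|lebesgue. ?s x)"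
      using wpos by (intro set_int_mono_set[OF isQ E]) auto
    have key: "2 * measure lebesgue E \<le> t * wmeas w E + (LINT x:?Q|lebesgue. ?s x) / t" if t: "t > 0" for t
    proof -
      have "2 * measure lebesgue E = (LINT x:E|lebesgue. 2)"
        using set_integral_const[OF E(1) Efin, of "2::real"] by simp
      also have "\<dots> \<le> (LINT x:E|lebesgue. t * w x + ?s x / t)"
      proof (rule set_integral_mono_AE)
        show "set_integrable lebesgue E (\<lambda>x. 2::real)"
          using Efin E(1) unfolding set_integrable_def
          by (simp add: integrable_real_indicator less_top)
        show "set_integrable lebesgue E (\<lambda>x. t * w x + ?s x / t)"
          by (intro set_integral_add(1) set_integrable_mult_right set_integrable_divide iwE isE)
        show "AE x\<in>E in lebesgue. 2 \<le> t * w x + ?s x / t"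
          using ae
        proof eventually_elim
          case (elim x)
          define u where "u = t * w x"
          have u: "u > 0" using elim t by (simp add: u_def)
          have "?s x / t = 1 / u" by (simp add: u_def)
          moreover have "2 \<le> u + 1/u"
          proof -
            have "0 \<le> (u - 1)^2" by simp
            then have "2*u \<le> u*u + 1" by (simp add: power2_eq_square algebra_simps)
            then show ?thesis using u by (simp add: field_simps)
          qed
          ultimately show ?case unfolding u_def by (simp add: mult.commute)
        qed
      qed
      also have "\<dots> = t * wmeas w E + (LINT x:E|lebesgue. ?s x) / t"
      proof -
        have "(LINT x:E|lebesgue. t * w x + ?s x / t) = (LINT x:E|lebesgue. t * w x) + (LINT x:E|lebesgue. ?s x / t)"
          by (rule set_integral_add(2)) (intro set_integrable_mult_right iwE, intro set_integrable_divide isE)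
        then show ?thesis unfolding wmeas_def by (simp only: set_integral_mult_right set_integral_divide_zero)
      qed
      also have "\<dots> \<le> t * wmeas w E + (LINT x:?Q|lebesgue. ?s x) / t"
        using sEQ t by (simp add: divide_right_mono)
      finally show ?thesis .
    qed
    have E2: "(measure lebesgue E)^2 \<le> wmeas w E * (LINT x:?Q|lebesgue. ?s x)"
      by (rule real_amgm_aux[OF measure_nonneg nuE sQ key])
    have mQ: "measure lebesgue ?Q > 0" using r by (simp add: cube_measure)
    have "avg w ?Q * avg ?s ?Q \<le> C" using C0[OF r, of c] unfolding C_def by linarith
    then have QQ: "wmeas w ?Q * (LINT x:?Q|lebesgue. ?s x) \<le> C * (measure lebesgue ?Q)^2"
      using mQ by (simp add: avg_def wmeas_def field_simps power2_eq_square)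
    have "(measure lebesgue E)^2 * wmeas w ?Q \<le> wmeas w E * (LINT x:?Q|lebesgue. ?s x) * wmeas w ?Q"
      using E2 nuQ by (simp add: mult_right_mono)
    also have "\<dots> = wmeas w E * (wmeas w ?Q * (LINT x:?Q|lebesgue. ?s x))" by simp
    also have "\<dots> \<le> wmeas w E * (C * (measure lebesgue ?Q)^2)"
      using QQ nuE by (simp add: mult_left_mono)
    finally show ?thesis by (simp add: algebra_simps)
  qed
  then show ?thesis using that[of C] by (simp add: C_def)
qed


lemma const_set_integrable:
  assumes "B \<in> lmeasurable"
  shows "set_integrable lebesgue B (\<lambda>x. c::real)"
  using assms unfolding set_integrable_def lmeasurable_iff_integrable
  by (simp add: integrable_mult_right)

lemma const_set_integral:
  assumes "B \<in> lmeasurable"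
  shows "(LINT x:B|lebesgue. (c::real)) = measure lebesgue B * c"
  using set_integral_const[unfolded infinity_ennreal_def, OF fmeasurableD[OF assms] fmeasurableD2[OF assms], of c] by (simp add: mult.commute)

lemma osc_le:
  fixes b :: "'a::euclidean_space \<Rightarrow> real"
  assumes iQ: "set_integrable lebesgue Q b" and Q: "Q \<in> lmeasurable" and B: "B \<in> lmeasurable" "B \<subseteq> Q"
    and mB: "measure lebesgue B > 0"
  shows "(LINT x:B|lebesgue. \<bar>b x - avg b B\<bar>) \<le> 2 * (LINT x:Q|lebesgue. \<bar>b x - m\<bar>)"
proof -
  have Bs: "B \<in> sets lebesgue" using B by (simp add: fmeasurable_def)
  have iB: "set_integrable lebesgue B b" using set_integrable_subset[OF iQ Bs B(2)] .
  have igB: "set_integrable lebesgue B (\<lambda>x. b x - m)"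
    using iB const_set_integrable[OF B(1)] by (rule set_integral_diff(1))
  have igQ: "set_integrable lebesgue Q (\<lambda>x. b x - m)"
    using iQ const_set_integrable[OF Q] by (rule set_integral_diff(1))
  have iaB: "set_integrable lebesgue B (\<lambda>x. \<bar>b x - m\<bar>)" using set_integrable_abs[OF igB] .
  have iaQ: "set_integrable lebesgue Q (\<lambda>x. \<bar>b x - m\<bar>)" using set_integrable_abs[OF igQ] .
  define aB where "aB = avg b B"
  have aB: "measure lebesgue B * aB = (LINT x:B|lebesgue. b x)"
    using mB by (simp add: aB_def avg_def)
  have ib2: "set_integrable lebesgue B (\<lambda>x. b x - aB)"
    using iB const_set_integrable[OF B(1)] by (rule set_integral_diff(1))
  have "(LINT x:B|lebesgue. \<bar>b x - aB\<bar>) \<le> (LINT x:B|lebesgue. \<bar>b x - m\<bar> + \<bar>m - aB\<bar>)"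
    by (rule set_integral_mono[OF set_integrable_abs[OF ib2] set_integral_add(1)[OF iaB const_set_integrable[OF B(1)]]]) auto
  also have "\<dots> = (LINT x:B|lebesgue. \<bar>b x - m\<bar>) + measure lebesgue B * \<bar>m - aB\<bar>"
    using set_integral_add(2)[OF iaB const_set_integrable[OF B(1)]] const_set_integral[OF B(1)] by simp
  also have "measure lebesgue B * \<bar>m - aB\<bar> = \<bar>(LINT x:B|lebesgue. b x - m)\<bar>"
  proof -
    have "(LINT x:B|lebesgue. b x - m) = (LINT x:B|lebesgue. b x) - measure lebesgue B * m"
      using set_integral_diff(2)[OF iB const_set_integrable[OF B(1)]] const_set_integral[OF B(1)] by simp
    then have "(LINT x:B|lebesgue. b x - m) = measure lebesgue B * (aB - m)"
      using aB by (simp add: algebra_simps)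
    then show ?thesis using mB by (simp add: abs_mult abs_minus_commute)
  qed
  also have "\<bar>(LINT x:B|lebesgue. b x - m)\<bar> \<le> (LINT x:B|lebesgue. \<bar>b x - m\<bar>)"
    using set_integral_norm_bound[OF igB] by simp
  also have "(LINT x:B|lebesgue. \<bar>b x - m\<bar>) \<le> (LINT x:Q|lebesgue. \<bar>b x - m\<bar>)"
    by (rule set_int_mono_set[OF iaQ Bs B(2)]) auto
  finally show ?thesis unfolding aB_def by linarith
qed


lemma cube_in_ball:
  fixes c :: "'a::euclidean_space"
  assumes r: "r > 0"
  shows "cube c (r / (2 * DIM('a))) \<subseteq> ball c r"
proof
  fix x assume x: "x \<in> cube c (r / (2 * DIM('a)))"
  have "norm (x - c) \<le> (\<Sum>i\<in>Basis. \<bar>(x - c) \<bullet> i\<bar>)" by (rule norm_le_l1)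
  also have "\<dots> \<le> (\<Sum>i\<in>(Basis::'a set). r / (2 * DIM('a)))"
    using x unfolding cube_def by (intro sum_mono) (auto simp: inner_diff_left)
  also have "\<dots> = r / 2" by simp
  finally show "x \<in> ball c r" using r by (simp add: dist_norm norm_minus_commute)
qed

lemma dyadic_cover:
  fixes c :: "'a::euclidean_space"
  assumes r: "r > 0"
  shows "\<exists>j k. (j, k) \<in> (dyadic_index :: (int \<times> ('a \<Rightarrow> int)) set) \<and>
     ball c r \<subseteq> dyadic_dilate (20 * sqrt (DIM('a))) j k \<and>
     measure lebesgue (dyadic_dilate (20 * sqrt (DIM('a))) j k :: 'a set) \<le> (40 * sqrt (DIM('a)) * r) ^ DIM('a)"
proof -
  define n where "n = DIM('a)"
  have n1: "sqrt n \<ge> 1" by (simp add: n_def DIM_positive)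
  define j where "j = \<lceil>log 2 r\<rceil>"
  define h where "h = 2 powr j"
  have hpos: "h > 0" by (simp add: h_def)
  have hr: "r \<le> h"
  proof -
    have "r = 2 powr (log 2 r)" using r by simp
    also have "\<dots> \<le> h" unfolding h_def j_def by (rule powr_mono) auto
    finally show ?thesis .
  qed
  have hr2: "h \<le> 2 * r"
  proof -
    have "h \<le> 2 powr (log 2 r + 1)" unfolding h_def j_def by (rule powr_mono) auto
    also have "\<dots> = 2 * r" using r by (simp add: powr_add)
    finally show ?thesis .
  qed
  define k :: "'a \<Rightarrow> int" where "k = (\<lambda>i. if i \<in> Basis then \<lfloor>c \<bullet> i / h\<rfloor> else 0)"
  define ctr :: 'a where "ctr = (\<Sum>i\<in>Basis. (2 powr j * (k i + 1/2)) *\<^sub>R i)"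
  have ctri: "ctr \<bullet> i = h * (k i + 1/2)" if "i \<in> Basis" for i
    using that unfolding ctr_def h_def by (simp add: inner_sum_left inner_Basis if_distrib cong: if_cong)
  have cc: "\<bar>c \<bullet> i - ctr \<bullet> i\<bar> \<le> h / 2" if i: "i \<in> Basis" for i
  proof -
    have k: "k i = \<lfloor>c \<bullet> i / h\<rfloor>" using i by (simp add: k_def)
    have "k i \<le> c \<bullet> i / h" "c \<bullet> i / h < k i + 1" unfolding k by linarith+
    then have "h * k i \<le> c \<bullet> i" "c \<bullet> i < h * (k i + 1)" using hpos by (simp_all add: field_simps)
    moreover have "h * real_of_int (k i + 1) = h * k i + h" by (simp add: algebra_simps)
    moreover have "ctr \<bullet> i = h * k i + h/2" using ctri[OF i] by (simp add: algebra_simps)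
    ultimately show ?thesis unfolding abs_le_iff by linarith
  qed
  have idx: "(j, k) \<in> (dyadic_index :: (int \<times> ('a \<Rightarrow> int)) set)"
    unfolding dyadic_index_def k_def by auto
  have dd: "dyadic_dilate (20 * sqrt n) j k = cube ctr (10 * sqrt n * h)"
    unfolding dyadic_dilate_def ctr_def h_def by (simp add: mult.assoc)
  have sub: "ball c r \<subseteq> cube ctr (10 * sqrt n * h)"
  proof
    fix x assume x: "x \<in> ball c r"
    show "x \<in> cube ctr (10 * sqrt n * h)"
      unfolding cube_def
    proof (intro CollectI ballI)
      fix i :: 'a assume i: "i \<in> Basis"
      have "\<bar>(x - c) \<bullet> i\<bar> \<le> norm (x - c)" by (rule Basis_le_norm[OF i])
      also have "\<dots> < r" using x by (simp add: dist_norm norm_minus_commute)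
      finally have "\<bar>x \<bullet> i - c \<bullet> i\<bar> \<le> h" using hr by (simp add: inner_diff_left)
      then have "\<bar>x \<bullet> i - ctr \<bullet> i\<bar> \<le> 3/2 * h" using cc[OF i] by linarith
      also have "\<dots> \<le> 10 * sqrt n * h" using mult_right_mono[of "3/2" "10 * sqrt n" h] n1 hpos by linarith
      finally show "\<bar>x \<bullet> i - ctr \<bullet> i\<bar> \<le> 10 * sqrt n * h" .
    qed
  qed
  have "measure lebesgue (cube ctr (10 * sqrt n * h)) = (2 * (10 * sqrt n * h)) ^ n"
    using hpos by (simp add: cube_measure n_def)
  also have "\<dots> \<le> (40 * sqrt n * r) ^ n"
  proof (rule power_mono)
    have "h * sqrt n \<le> (2 * r) * sqrt n" using hr2 by (intro mult_right_mono) auto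
    then show "2 * (10 * sqrt n * h) \<le> 40 * sqrt n * r" by (simp add: algebra_simps)
  qed (use hpos in auto)
  finally show ?thesis using idx sub dd unfolding n_def by metis
qed

lemma weak_ell_bound:
  assumes "weak_ell n I a"
  obtains C where "\<And>q. q \<in> I \<Longrightarrow> \<bar>a q\<bar> \<le> C"
proof -
  from assms obtain C where ne: "rearr_set I a 1 \<noteq> {}" and C: "real 1 powr (1 / real n) * rearr I a 1 \<le> C"
    unfolding weak_ell_def by auto
  have "\<bar>a q\<bar> \<le> C" if q: "q \<in> I" for q
  proof -
    have "\<bar>a q\<bar> \<le> rearr I a 1"
      unfolding rearr_def
    proof (rule cInf_greatest[OF ne])
      fix t assume "t \<in> rearr_set I a 1"
      then have "{q\<in>I. \<bar>a q\<bar> > t} = {}" unfolding rearr_set_def by auto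
      then show "\<bar>a q\<bar> \<le> t" using q by auto
    qed
    then show ?thesis using C by simp
  qed
  then show ?thesis using that by blast
qed


theorem lemma6p1:
  fixes \<nu> :: "'a::euclidean_space \<Rightarrow> real"
  assumes "A2 \<nu>"
  shows "W \<nu> \<subseteq> BMO \<nu>"
proof
  fix b assume "b \<in> W \<nu>"
  then have lib: "loc_int b" and we: "weak_ell DIM('a) (dyadic_index :: (int \<times> ('a \<Rightarrow> int)) set)
       (\<lambda>(j, k). wosc \<nu> b (dyadic_dilate (20 * sqrt (DIM('a))) j k))"
    unfolding W_def by auto
  obtain C1 where C1: "\<And>q. q \<in> (dyadic_index :: (int \<times> ('a \<Rightarrow> int)) set) \<Longrightarrow>
      \<bar>(\<lambda>(j, k). wosc \<nu> b (dyadic_dilate (20 * sqrt (DIM('a))) j k)) q\<bar> \<le> C1"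
    using weak_ell_bound[OF we] by blast
  obtain C where C: "C \<ge> 0" and dbl: "\<And>c r E. 0 < r \<Longrightarrow> E \<in> sets lebesgue \<Longrightarrow> E \<subseteq> cube c r \<Longrightarrow>
     (measure lebesgue E)^2 * wmeas \<nu> (cube c r) \<le> C * (measure lebesgue (cube c r))^2 * wmeas \<nu> E"
    using A2_doubling[OF assms] by blast
  have wpos: "\<And>x. 0 \<le> \<nu> x" and liw: "loc_int \<nu>" using assms unfolding A2_def by auto
  define n where "n = DIM('a)"
  define K0 :: real where "K0 = (40 * real n * sqrt n) ^ n"
  define Cf where "Cf = 2 * max C1 0 * C * K0^2"
  have Cf0: "Cf \<ge> 0" using C by (simp add: Cf_def K0_def)
  have "wosc \<nu> b (ball c r) \<le> Cf" if r: "0 < r" for c r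
  proof -
    let ?B = "ball c r"
    obtain j k where jk: "(j, k) \<in> (dyadic_index :: (int \<times> ('a \<Rightarrow> int)) set)"
      and sub: "?B \<subseteq> dyadic_dilate (20 * sqrt n) j k"
      and mQ: "measure lebesgue (dyadic_dilate (20 * sqrt n) j k :: 'a set) \<le> (40 * sqrt n * r) ^ n"
      using dyadic_cover[OF r, of c] unfolding n_def by blast
    define Q where "Q = (dyadic_dilate (20 * sqrt n) j k :: 'a set)"
    define ctr :: 'a where "ctr = (\<Sum>i\<in>Basis. (2 powr j * (k i + 1/2)) *\<^sub>R i)"
    define s where "s = 20 * sqrt n * 2 powr j / 2"
    have s: "s > 0" by (simp add: s_def n_def DIM_positive)
    have Qc: "Q = cube ctr s" unfolding Q_def dyadic_dilate_def ctr_def s_def by simp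
    have Ql: "Q \<in> lmeasurable" unfolding Qc by (rule cube_lmeas)
    define E where "E = cube c (r / (2 * n))"
    have EB: "E \<subseteq> ?B" unfolding E_def n_def using cube_in_ball[OF r] by simp
    have EQ: "E \<subseteq> Q" using EB sub unfolding Q_def by auto
    have mE: "measure lebesgue E = (r / n) ^ n"
      using r by (simp add: E_def cube_measure n_def)
    have n0: "n > 0" by (simp add: n_def DIM_positive)
    have mEpos: "measure lebesgue E > 0" using mE r n0 by simp
    have mB: "measure lebesgue ?B > 0"
    proof -
      have "measure lebesgue E \<le> measure lebesgue ?B"
        by (rule measure_mono_fmeasurable[OF EB]) (simp_all add: E_def cube_lmeas fmeasurableD)
      then show ?thesis using mEpos by linarith
    qed
    have wQ: "wosc \<nu> b Q \<le> C1" using C1[OF jk] unfolding Q_def n_def by simp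
    have iwQ: "set_integrable lebesgue Q \<nu>" unfolding Qc by (rule loc_int_cube[OF liw])
    have nuEB: "wmeas \<nu> E \<le> wmeas \<nu> ?B"
      unfolding wmeas_def
      by (rule set_int_mono_set[OF set_integrable_subset[OF iwQ _ sub[folded Q_def]] _ EB])
         (simp_all add: E_def cube_lmeas fmeasurableD wpos)
    have nuBQ: "wmeas \<nu> ?B \<le> wmeas \<nu> Q"
      unfolding wmeas_def by (rule set_int_mono_set[OF iwQ _ sub[folded Q_def]]) (simp_all add: wpos)
    show ?thesis
    proof (cases "wmeas \<nu> ?B = 0")
      case True
      then show ?thesis using Cf0 by (simp add: wosc_def)
    next
      case False
      have nuB: "wmeas \<nu> ?B > 0"
      proof -
        have "0 \<le> wmeas \<nu> ?B" unfolding wmeas_def by (rule set_int_nonneg) (simp add: wpos)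
        then show ?thesis using False by linarith
      qed
      have nuQ: "wmeas \<nu> Q > 0" using nuB nuBQ by linarith
      have ibQ: "set_integrable lebesgue Q b" unfolding Qc by (rule loc_int_cube[OF lib])
      have osc: "(LINT x:?B|lebesgue. \<bar>b x - avg b ?B\<bar>) \<le> 2 * (LINT x:Q|lebesgue. \<bar>b x - avg b Q\<bar>)"
        by (rule osc_le[OF ibQ Ql lmeasurable_ball sub[folded Q_def] mB])
      have IQ: "(LINT x:Q|lebesgue. \<bar>b x - avg b Q\<bar>) \<le> max C1 0 * wmeas \<nu> Q"
      proof -
        have "(LINT x:Q|lebesgue. \<bar>b x - avg b Q\<bar>) = wosc \<nu> b Q * wmeas \<nu> Q"
          using nuQ by (simp add: wosc_def)
        also have "\<dots> \<le> max C1 0 * wmeas \<nu> Q" using wQ nuQ by (intro mult_right_mono) auto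
        finally show ?thesis .
      qed
      have ratio: "measure lebesgue Q \<le> K0 * measure lebesgue E"
      proof -
        have "(40 * sqrt n * r) ^ n = K0 * (r / n) ^ n"
        proof -
          have "K0 * (r / n) ^ n = (40 * real n * sqrt n * (r / n)) ^ n"
            unfolding K0_def by (simp only: power_mult_distrib)
          also have "40 * real n * sqrt n * (r / n) = 40 * sqrt n * r" using n0 by simp
          finally show ?thesis by simp
        qed
        then show ?thesis using mQ mE unfolding Q_def by simp
      qed
      have dQ: "(measure lebesgue E)^2 * wmeas \<nu> Q \<le> C * (measure lebesgue Q)^2 * wmeas \<nu> E"
        using dbl[OF s, of E ctr] EQ unfolding Qc E_def by (simp add: cube_lmeas fmeasurableD)
      have "C * (measure lebesgue Q)^2 * wmeas \<nu> E \<le> C * (K0 * measure lebesgue E)^2 * wmeas \<nu> E"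
      proof -
        have nuE: "wmeas \<nu> E \<ge> 0" unfolding wmeas_def using wpos by (intro set_int_nonneg) auto
        have "(measure lebesgue Q)^2 \<le> (K0 * measure lebesgue E)^2"
          using ratio by (intro power_mono) auto
        then show ?thesis using C nuE by (intro mult_right_mono mult_left_mono) auto
      qed
      with dQ have "(measure lebesgue E)^2 * wmeas \<nu> Q \<le> (measure lebesgue E)^2 * (C * K0^2 * wmeas \<nu> E)"
        by (simp add: power_mult_distrib algebra_simps)
      then have nuQE: "wmeas \<nu> Q \<le> C * K0^2 * wmeas \<nu> E"
        using mEpos by (simp add: mult_le_cancel_left_pos)
      have "(LINT x:?B|lebesgue. \<bar>b x - avg b ?B\<bar>) \<le> 2 * (max C1 0 * (C * K0^2 * wmeas \<nu> ?B))"
      proof -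
        have "wmeas \<nu> Q \<le> C * K0^2 * wmeas \<nu> ?B"
        proof -
          have "C * K0^2 * wmeas \<nu> E \<le> C * K0^2 * wmeas \<nu> ?B"
            using nuEB C by (intro mult_left_mono) auto
          then show ?thesis using nuQE by linarith
        qed
        then have "max C1 0 * wmeas \<nu> Q \<le> max C1 0 * (C * K0^2 * wmeas \<nu> ?B)"
          by (intro mult_left_mono) auto
        then show ?thesis using osc IQ by linarith
      qed
      moreover have "Cf * wmeas \<nu> ?B = 2 * (max C1 0 * (C * K0^2 * wmeas \<nu> ?B))"
        unfolding Cf_def by (simp only: mult.assoc mult.left_commute)
      ultimately show ?thesis unfolding wosc_def using nuB by (simp only: pos_divide_le_eq)
    qed
  qed
  then show "b \<in> BMO \<nu>" unfolding BMO_def using lib by blast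
qed

end
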